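(* Let $L\in R[x][\partial]$ have order $r>0$, and let $p\in R[x]$ be a primitive polynomial dividing $\mathrm{lc}_\partial(L)$. If there exists a $p$-removing operator for $L$ over $Q_R[x]$, then there exists a $p$-removing operator for $L$ over $R[x]$ of the same order.
   Context: $R$ is a principal ideal domain with quotient field $Q_R$; $\sigma$ is an $R$-automorphism of $R[x]$ with $\sigma(x)=\gamma x+\tau$ ($\gamma$ a unit), $\delta$ an $R$-linear $\sigma$-derivation with $\deg\delta(x)\le1$; $R[x][\partial]$ is the Ore algebra with $\partial p=\sigma(p)\partial+\delta(p)$, contained in $Q_R[x][\partial]\subseteq Q_R(x)[\partial]$. Primitive: coefficients have gcd $1$. For a coefficient ring $D\in\{R[x],Q_R[x]\}$ and $p\in D$ dividing $\mathrm{lc}_\partial(L)$, a $p$-removing operator for $L$ over $D$ of order $k$ is $P\in Q_R(x)[\partial]$ of order $k$ such that $PL\in D[\partial]$ and $\sigma^{-k}(\mathrm{lc}_\partial(PL))=\frac{w}{vp}\mathrm{lc}_\partial(L)$ for some $w,v\in D$ with $\gcd(p,w)=1$ in $D$. *)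

theory Defs
  imports "HOL-Computational_Algebra.Polynomial" "HOL-Computational_Algebra.Polynomial_Factorial"
begin

definition is_pid :: "'a::idom itself \<Rightarrow> bool" where
  "is_pid _ \<longleftrightarrow> (\<forall>I::'a set. (0 \<in> I \<and> (\<forall>a\<in>I. \<forall>b\<in>I. a - b \<in> I) \<and> (\<forall>a\<in>I. \<forall>r. r * a \<in> I))
      \<longrightarrow> (\<exists>g. I = range (\<lambda>r. r * g)))"

definition primitive_poly :: "'a::idom poly \<Rightarrow> bool" where
  "primitive_poly p \<longleftrightarrow> (\<forall>d. (\<forall>i. d dvd coeff p i) \<longrightarrow> d dvd 1)"

definition coprime_in :: "'a::idom \<Rightarrow> 'a \<Rightarrow> bool" where
  "coprime_in a b \<longleftrightarrow> (\<forall>c. c dvd a \<longrightarrow> c dvd b \<longrightarrow> c dvd 1)"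

type_synonym 'a ratfun = "'a fract poly fract"

definition embQx :: "'a::idom fract poly \<Rightarrow> 'a ratfun" where
  "embQx q = to_fract q"

definition embRx :: "'a::idom poly \<Rightarrow> 'a ratfun" where
  "embRx p = to_fract (map_poly to_fract p)"

definition embR :: "'a::idom \<Rightarrow> 'a ratfun" where
  "embR c = embRx [:c:]"

definition varX :: "'a::idom ratfun" where
  "varX = embRx [:0, 1:]"

text \<open>Ore operators with coefficients in a field K are represented as polynomials in \<partial>
  (type K poly); the coefficient of \<partial>^i is coeff P i, the order is degree, lc is lead_coeff.
  Multiplication: \<partial> p = \<sigma>(p) \<partial> + \<delta>(p).\<close>
definition ore_d :: "('k \<Rightarrow> 'k) \<Rightarrow> ('k \<Rightarrow> 'k) \<Rightarrow> 'k::comm_ring_1 poly \<Rightarrow> 'k poly" where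
  "ore_d \<sigma> \<delta> L = pCons 0 (map_poly \<sigma> L) + map_poly \<delta> L"

definition ore_mult :: "('k \<Rightarrow> 'k) \<Rightarrow> ('k \<Rightarrow> 'k) \<Rightarrow> 'k::comm_ring_1 poly \<Rightarrow> 'k poly \<Rightarrow> 'k poly" where
  "ore_mult \<sigma> \<delta> P L = (\<Sum>i\<le>degree P. smult (coeff P i) ((ore_d \<sigma> \<delta> ^^ i) L))"

definition p_removing ::
  "('k \<Rightarrow> 'k) \<Rightarrow> ('k \<Rightarrow> 'k) \<Rightarrow> ('d::idom \<Rightarrow> 'k::field) \<Rightarrow> 'd \<Rightarrow> 'k poly \<Rightarrow> 'k poly \<Rightarrow> nat \<Rightarrow> bool" where
  "p_removing \<sigma> \<delta> emb p L P k \<longleftrightarrow>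
     P \<noteq> 0 \<and> degree P = k \<and>
     (\<forall>i. coeff (ore_mult \<sigma> \<delta> P L) i \<in> range emb) \<and>
     (\<exists>w v. v \<noteq> 0 \<and> coprime_in p w \<and>
        (inv \<sigma> ^^ k) (lead_coeff (ore_mult \<sigma> \<delta> P L)) = emb w / (emb v * emb p) * lead_coeff L)"

end

theory Submission
  imports Defs
begin

lemma denom_poly:
  fixes q :: "'a::idom fract poly"
  shows "\<exists>d q0. d \<noteq> 0 \<and> fract_poly q0 = smult (to_fract d) q"
proof (induction q)
  case 0
  show ?case by (rule exI[of _ 1], rule exI[of _ 0]) simp
next
  case (pCons a q)
  then obtain d q0 where d: "d \<noteq> 0" "fract_poly q0 = smult (to_fract d) q" by blast
  obtain n m where a: "a = Fract n m" "m \<noteq> 0" by (cases a)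
  have am: "to_fract m * a = to_fract n" using a by (simp add: Fract_conv_to_fract)
  show ?case
  proof (intro exI conjI)
    show "d * m \<noteq> 0" using d a by simp
    show "fract_poly (pCons (n * d) (smult m q0)) = smult (to_fract (d * m)) (pCons a q)"
      using d am by (simp add: map_poly_pCons algebra_simps flip: am)
  qed
qed

lemma denom_many:
  fixes f :: "nat \<Rightarrow> 'a::idom fract poly"
  shows "\<exists>d. d \<noteq> 0 \<and> (\<forall>i\<le>n. \<exists>q0. fract_poly q0 = smult (to_fract d) (f i))"
proof (induction n)
  case 0
  then show ?case using denom_poly[of "f 0"] by auto
next
  case (Suc n)
  then obtain d where d: "d \<noteq> 0" "\<forall>i\<le>n. \<exists>q0. fract_poly q0 = smult (to_fract d) (f i)" by blast
  obtain e q1 where e: "e \<noteq> 0" "fract_poly q1 = smult (to_fract e) (f (Suc n))"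
    using denom_poly by blast
  show ?case
  proof (intro exI[of _ "d * e"] conjI allI impI)
    show "d * e \<noteq> 0" using d e by simp
    fix i assume i: "i \<le> Suc n"
    show "\<exists>q0. fract_poly q0 = smult (to_fract (d * e)) (f i)"
    proof (cases "i = Suc n")
      case True
      then show ?thesis using e by (intro exI[of _ "smult d q1"]) (simp add: mult.commute)
    next
      case False
      then obtain q0 where "fract_poly q0 = smult (to_fract d) (f i)" using d i by force
      then show ?thesis by (intro exI[of _ "smult e q0"]) (simp add: mult.commute)
    qed
  qed
qed

lemma embRx_mult: "embRx (a * b) = embRx a * embRx b"
  by (simp add: embRx_def to_fract_mult)

lemma embRx_smult: "embRx (smult c a) = embR c * embRx a"
proof -
  have "smult c a = [:c:] * a" by simp
  then show ?thesis by (simp only: embRx_mult embR_def)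
qed

lemma embR_nz: "c \<noteq> 0 \<Longrightarrow> embR c \<noteq> 0"
  by (simp add: embR_def embRx_def)

lemma ore_mult_smult:
  fixes c :: "'k::field"
  assumes that: "c \<noteq> 0"
  shows "ore_mult \<sigma> \<delta> (smult c P) L = smult c (ore_mult \<sigma> \<delta> P L)"
proof -
  have "ore_mult \<sigma> \<delta> (smult c P) L = (\<Sum>i\<le>degree P. [:c:] * smult (coeff P i) ((ore_d \<sigma> \<delta> ^^ i) L))"
    using that by (simp add: ore_mult_def degree_smult_eq mult.commute)
  also have "\<dots> = [:c:] * ore_mult \<sigma> \<delta> P L" by (simp add: ore_mult_def sum_distrib_left)
  finally show ?thesis by simp
qed

lemma embR_mult: "embR (a * b) = embR a * embR b"
proof -
  have "[:a:] * [:b:] = [:a * b:]" by simp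
  then show ?thesis unfolding embR_def by (simp only: embRx_mult[symmetric])
qed

lemma field_aux:
  fixes c dv dw W V Pp l :: "'k::field"
  assumes "dw \<noteq> 0" "dv \<noteq> 0"
  shows "c * (W / (V * Pp) * l) = (c * dv * (dw * W)) / ((dw * (dv * V)) * Pp) * l"
proof -
  have "(c * dv * (dw * W)) / ((dw * (dv * V)) * Pp) = (dv * dw) * (c * W) / ((dv * dw) * (V * Pp))"
    by (simp add: ac_simps)
  also have "\<dots> = c * W / (V * Pp)" using assms by (simp only: mult_divide_mult_cancel_left_if) simp
  finally show ?thesis by simp
qed

lemma embRx_fract: "fract_poly q0 = smult (to_fract d) q \<Longrightarrow> embRx q0 = embR d * embQx q"
proof -
  assume h: "fract_poly q0 = smult (to_fract d) q"
  have "smult (to_fract d) q = [:to_fract d:] * q" by simp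
  then have "embRx q0 = to_fract ([:to_fract d:] * q)" using h by (simp add: embRx_def)
  moreover have "embR d = to_fract [:to_fract d:]" by (simp add: embR_def embRx_def map_poly_pCons)
  ultimately show ?thesis by (simp only: embQx_def to_fract_mult)
qed

lemma inv_iter_embR:
  fixes \<sigma> :: "'a::idom ratfun \<Rightarrow> 'a ratfun"
  assumes bij: "bij \<sigma>" and mult: "\<And>f g. \<sigma> (f * g) = \<sigma> f * \<sigma> g"
    and R: "\<And>c. \<sigma> (embR c) = embR c"
  shows "(inv \<sigma> ^^ k) (embR c * y) = embR c * (inv \<sigma> ^^ k) y"
proof -
  have inj: "inj \<sigma>" using bij bij_is_inj by blast
  have sur: "\<And>y. \<sigma> (inv \<sigma> y) = y" using bij by (simp add: bij_is_surj surj_f_inv_f)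
  have im: "inv \<sigma> (a * b) = inv \<sigma> a * inv \<sigma> b" for a b
    by (rule injD[OF inj]) (simp add: sur mult)
  have ic: "inv \<sigma> (embR c) = embR c" using inv_f_f[OF inj, of "embR c"] R by simp
  show ?thesis by (induction k) (simp_all add: im ic)
qed

lemma coprime_lift:
  fixes p w' :: "'a::idom poly" and w :: "'a fract poly"
  assumes prim: "primitive_poly p" and cop: "coprime_in (fract_poly p) w"
    and e: "fract_poly w' = smult a w" and a: "a \<noteq> 0"
  shows "coprime_in p w'"
  unfolding coprime_in_def
proof (intro allI impI)
  fix q assume qp: "q dvd p" and qw: "q dvd w'"
  have "fract_poly q dvd fract_poly p" using qp by (rule fract_poly_dvd)
  moreover have "fract_poly q dvd w"
    using fract_poly_dvd[OF qw] e a dvd_smult_cancel by metis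
  ultimately have u: "fract_poly q dvd 1" using cop unfolding coprime_in_def by blast
  then have "fract_poly q \<noteq> 0" by auto
  then have "degree (fract_poly q) = 0" using u is_unit_iff_degree by blast
  then have dq: "degree q = 0" using degree_map_poly[of to_fract q] by simp
  then have qc: "q = [:coeff q 0:]" by (metis degree_0_id)
  then have "\<forall>n. coeff q 0 dvd coeff p n" using qp const_poly_dvd_iff by metis
  then have "coeff q 0 dvd 1" using prim unfolding primitive_poly_def by blast
  then show "q dvd 1" by (subst qc) (simp add: is_unit_const_poly_iff)
qed

theorem mainTheorem17:
  fixes \<sigma> \<delta> :: "'a::idom ratfun \<Rightarrow> 'a ratfun"
    and \<gamma> \<tau> a1 a0 :: 'a
    and L :: "'a poly poly" and p :: "'a poly"
  assumes pid: "is_pid TYPE('a)"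
    and \<gamma>_unit: "\<gamma> dvd 1"
    and \<sigma>_bij: "bij \<sigma>"
    and \<sigma>_add: "\<And>f g. \<sigma> (f + g) = \<sigma> f + \<sigma> g"
    and \<sigma>_mult: "\<And>f g. \<sigma> (f * g) = \<sigma> f * \<sigma> g"
    and \<sigma>_one: "\<sigma> 1 = 1"
    and \<sigma>_R: "\<And>c. \<sigma> (embR c) = embR c"
    and \<sigma>_x: "\<sigma> varX = embR \<gamma> * varX + embR \<tau>"
    and \<delta>_add: "\<And>f g. \<delta> (f + g) = \<delta> f + \<delta> g"
    and \<delta>_mult: "\<And>f g. \<delta> (f * g) = \<sigma> f * \<delta> g + \<delta> f * g"
    and \<delta>_R: "\<And>c. \<delta> (embR c) = 0"
    and \<delta>_x: "\<delta> varX = embR a1 * varX + embR a0"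
    and order_pos: "degree L > 0"
    and prim: "primitive_poly p"
    and p_dvd: "p dvd lead_coeff L"
    and exQ: "\<exists>P. p_removing \<sigma> \<delta> embQx (map_poly to_fract p) (map_poly embRx L) P k"
  shows "\<exists>P. p_removing \<sigma> \<delta> embRx p (map_poly embRx L) P k"
proof -
  define Lm where "Lm = map_poly embRx L"
  obtain P where hP: "p_removing \<sigma> \<delta> embQx (fract_poly p) Lm P k"
    using exQ unfolding Lm_def by blast
  have P0: "P \<noteq> 0" and Pk: "degree P = k"
    and Pc: "\<forall>i. coeff (ore_mult \<sigma> \<delta> P Lm) i \<in> range embQx"
    and hex: "\<exists>w v. v \<noteq> 0 \<and> coprime_in (fract_poly p) w \<and>
        (inv \<sigma> ^^ k) (lead_coeff (ore_mult \<sigma> \<delta> P Lm)) =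
            embQx w / (embQx v * embQx (fract_poly p)) * lead_coeff Lm"
    using hP unfolding p_removing_def by (simp_all only: simp_thms)
  from hex obtain w v where v0: "v \<noteq> 0" and cop: "coprime_in (fract_poly p) w"
    and E: "(inv \<sigma> ^^ k) (lead_coeff (ore_mult \<sigma> \<delta> P Lm)) =
            embQx w / (embQx v * embQx (fract_poly p)) * lead_coeff Lm"
    by blast
  define M where "M = ore_mult \<sigma> \<delta> P Lm"
  have "\<forall>i. \<exists>q. coeff M i = embQx q" using Pc unfolding M_def by blast
  then obtain f where f: "\<And>i. coeff M i = embQx (f i)" by metis
  obtain c where c0: "c \<noteq> 0"
    and cf: "\<forall>i\<le>degree M. \<exists>q0. fract_poly q0 = smult (to_fract c) (f i)"
    using denom_many[of "degree M" f] by blast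
  obtain dw w0 where dw: "dw \<noteq> 0" "fract_poly w0 = smult (to_fract dw) w"
    using denom_poly by blast
  obtain dv vv where dv: "dv \<noteq> 0" "fract_poly vv = smult (to_fract dv) v"
    using denom_poly by blast
  define P' where "P' = smult (embR c) P"
  have ec: "embR c \<noteq> 0" using c0 by (rule embR_nz)
  have M': "ore_mult \<sigma> \<delta> P' Lm = smult (embR c) M"
    unfolding P'_def M_def by (rule ore_mult_smult[OF ec])
  have wR: "embRx w0 = embR dw * embQx w" by (rule embRx_fract[OF dw(2)])
  have vR: "embRx vv = embR dv * embQx v" by (rule embRx_fract[OF dv(2)])
  have pR: "embQx (fract_poly p) = embRx p" by (simp add: embQx_def embRx_def)
  have vnz: "embQx v \<noteq> 0" using v0 by (simp add: embQx_def)
  have dwnz: "embR dw \<noteq> 0" using dw by (simp add: embR_nz)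
  have dvnz: "embR dv \<noteq> 0" using dv by (simp add: embR_nz)
  show ?thesis
    unfolding p_removing_def Lm_def[symmetric]
  proof (intro exI[of _ P'] conjI)
    show "P' \<noteq> 0" using P0 ec by (simp add: P'_def)
    show "degree P' = k" using Pk ec by (simp add: P'_def)
    show "\<forall>i. coeff (ore_mult \<sigma> \<delta> P' Lm) i \<in> range embRx"
    proof
      fix i
      show "coeff (ore_mult \<sigma> \<delta> P' Lm) i \<in> range embRx"
      proof (cases "i \<le> degree M")
        case True
        then obtain q0 where "fract_poly q0 = smult (to_fract c) (f i)" using cf by blast
        then have "embRx q0 = embR c * embQx (f i)" by (rule embRx_fract)
        then show ?thesis using f[of i] by (simp add: M') (metis rangeI)
      next
        case False
        then have "coeff M i = 0" by (simp add: coeff_eq_0)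
        then have "coeff (ore_mult \<sigma> \<delta> P' Lm) i = embRx 0" by (simp add: M' embRx_def)
        then show ?thesis by blast
      qed
    qed
    show "\<exists>w v. v \<noteq> 0 \<and> coprime_in p w \<and>
        (inv \<sigma> ^^ k) (lead_coeff (ore_mult \<sigma> \<delta> P' Lm)) = embRx w / (embRx v * embRx p) * lead_coeff Lm"
    proof (rule exI[of _ "smult (c * dv) w0"], rule exI[of _ "smult dw vv"], intro conjI)
    show "smult dw vv \<noteq> 0" using dv dw v0 by auto
    show "coprime_in p (smult (c * dv) w0)"
      by (rule coprime_lift[OF prim cop, of _ "to_fract (c * dv) * to_fract dw"])
         (use dw c0 dv in simp_all)
    have "(inv \<sigma> ^^ k) (lead_coeff (ore_mult \<sigma> \<delta> P' Lm)) = embR c * (inv \<sigma> ^^ k) (lead_coeff M)"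
      by (simp add: M' lead_coeff_smult inv_iter_embR[OF \<sigma>_bij \<sigma>_mult \<sigma>_R])
    also have "\<dots> = embRx (smult (c * dv) w0) / (embRx (smult dw vv) * embRx p) * lead_coeff Lm"
      unfolding M_def E embRx_smult wR vR pR embR_mult
      by (rule field_aux[OF dwnz dvnz])
    finally show "(inv \<sigma> ^^ k) (lead_coeff (ore_mult \<sigma> \<delta> P' Lm)) =
        embRx (smult (c * dv) w0) / (embRx (smult dw vv) * embRx p) * lead_coeff Lm" .
    qed
  qed
qed

end
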